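(* (a) If $\mathcal{T}_1=(V,\mathsf{p}_1)$ and $\mathcal{T}_2=(V,\mathsf{p}_2)$ are directed forests, then $\mathcal{T}_1$ is thinner than $\mathcal{T}_2$ if and only if $\mathrm{Chi}_{\mathcal{T}_1}(v)\subseteq\mathrm{Chi}_{\mathcal{T}_2}(v)$ for every $v\in V$. (b) Thickness ("thinner than") is a partial order on the set of all directed forests with a fixed set of vertices $V$. (c) The degenerate forest $(V,\mathrm{id}_V)$ is the smallest element with respect to this partial order among directed forests with vertex set $V$. (d) The maximal elements with respect to this partial order are precisely the directed trees and the rootless directed forests.
   Context: A directed forest is a pair $\mathcal{T}=(V,\mathsf{p})$ where $V$ is a nonempty set and $\mathsf{p}\colon V\to V$ satisfies: if $n\in\mathbb{N}$, $v\in V$ and $\mathsf{p}^n(v)=v$, then $\mathsf{p}(v)=v$. Roots: $\mathrm{root}(\mathcal{T})=\{v:\mathsf{p}(v)=v\}$; $\mathcal{T}$ is rootless if it has no roots. Children: $\mathrm{Chi}_{\mathcal{T}}(v)=\{u\in V:\mathsf{p}(u)=v\neq u\}$. The trees of $\mathcal{T}$ are the connected components of the graph with vertex set $V$ and edges $\{\mathsf{p}(u),u\}$ for $u\notin\mathrm{root}(\mathcal{T})$ (equivalently, classes of the relation $u\sim w$ iff $\mathsf{p}^m(u)=\mathsf{p}^n(w)$ for some $m,n\geq0$). A directed tree is a directed forest having exactly one tree. For directed forests $\mathcal{T}_1=(V,\mathsf{p}_1)$, $\mathcal{T}_2=(V,\mathsf{p}_2)$ on the same vertex set, $\mathcal{T}_1$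 is thinner than $\mathcal{T}_2$ ($\mathcal{T}_2$ thicker than $\mathcal{T}_1$) if $\mathsf{p}_1(v)\in\{v,\mathsf{p}_2(v)\}$ for all $v\in V$. *)

theory Defs
  imports Main
begin

text \<open>A directed forest on the vertex set given by the type 'a (the vertex set V is
  represented as the universe of the type 'a, hence automatically nonempty).\<close>
definition directed_forest :: "('a \<Rightarrow> 'a) \<Rightarrow> bool" where
  "directed_forest p \<longleftrightarrow> (\<forall>n::nat. \<forall>v. n \<ge> 1 \<longrightarrow> (p ^^ n) v = v \<longrightarrow> p v = v)"

definition roots :: "('a \<Rightarrow> 'a) \<Rightarrow> 'a set" where
  "roots p = {v. p v = v}"

definition rootless :: "('a \<Rightarrow> 'a) \<Rightarrow> bool" where
  "rootless p \<longleftrightarrow> roots p = {}"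

definition Chi :: "('a \<Rightarrow> 'a) \<Rightarrow> 'a \<Rightarrow> 'a set" where
  "Chi p v = {u. p u = v \<and> v \<noteq> u}"

definition same_tree :: "('a \<Rightarrow> 'a) \<Rightarrow> ('a \<times> 'a) set" where
  "same_tree p = {(u, w). \<exists>m n. (p ^^ m) u = (p ^^ n) w}"

definition trees :: "('a \<Rightarrow> 'a) \<Rightarrow> 'a set set" where
  "trees p = UNIV // same_tree p"

definition directed_tree :: "('a \<Rightarrow> 'a) \<Rightarrow> bool" where
  "directed_tree p \<longleftrightarrow> directed_forest p \<and> (\<exists>T. trees p = {T})"

definition thinner :: "('a \<Rightarrow> 'a) \<Rightarrow> ('a \<Rightarrow> 'a) \<Rightarrow> bool" where
  "thinner p1 p2 \<longleftrightarrow> (\<forall>v. p1 v \<in> {v, p2 v})"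

definition thinner_rel :: "(('a \<Rightarrow> 'a) \<times> ('a \<Rightarrow> 'a)) set" where
  "thinner_rel = {(p1, p2). directed_forest p1 \<and> directed_forest p2 \<and> thinner p1 p2}"

end

theory Submission
  imports Defs
begin

lemma fix_iter: "p x = x \<Longrightarrow> (p ^^ n) x = x"
  by (induction n) auto

lemma iter_agree:
  assumes "\<forall>k<n. q ((p ^^ k) v) = p ((p ^^ k) v)"
  shows "(q ^^ n) v = (p ^^ n) v"
  using assms by (induction n) auto

lemma upd_iter:
  "\<forall>k<n. ((p(x := y)) ^^ k) v \<noteq> x \<Longrightarrow> ((p(x := y)) ^^ n) v = (p ^^ n) v"
proof (induction n)
  case (Suc n)
  have "\<forall>k<n. ((p(x := y)) ^^ k) v \<noteq> x" using Suc.prems by (simp del: fun_upd_apply)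
  hence "((p(x := y)) ^^ n) v = (p ^^ n) v" using Suc.IH by blast
  moreover have "((p(x := y)) ^^ n) v \<noteq> x" using Suc.prems by (meson lessI)
  ultimately show ?case by (simp del: fun_upd_apply add: fun_upd_other)
qed simp

lemma attach_forest:
  assumes F: "directed_forest p" and R: "p x = x"
    and N: "\<not> (\<exists>m n. (p ^^ m) x = (p ^^ n) y)"
  shows "directed_forest (p(x := y))"
  unfolding directed_forest_def
proof (intro allI impI)
  fix n :: nat and v
  let ?q = "p(x := y)"
  assume n1: "n \<ge> 1" and cyc: "(?q ^^ n) v = v"
  have yk: "(p ^^ k) y \<noteq> x" for k
  proof
    assume "(p ^^ k) y = x"
    hence "(p ^^ 0) x = (p ^^ k) y" by simp
    thus False using N by blast
  qed
  have qy: "(?q ^^ k) y = (p ^^ k) y" for k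
    by (rule iter_agree) (simp add: yk)
  show "?q v = v"
  proof (cases "\<exists>k<n. (?q ^^ k) v = x")
    case True
    then obtain k where k: "k < n" "(?q ^^ k) v = x" by blast
    have "(?q ^^ (k + n)) v = (?q ^^ k) ((?q ^^ n) v)"
      by (simp only: funpow_add comp_apply)
    also have "\<dots> = x" by (simp only: cyc k(2))
    finally have a: "(?q ^^ (k + n)) v = x" .
    have "(?q ^^ (k + n)) v = (?q ^^ (n - 1)) ((?q ^^ Suc k) v)"
    proof -
      have "k + n = (n - 1) + Suc k" using n1 by simp
      then show ?thesis by (simp only: funpow_add comp_apply)
    qed
    also have "(?q ^^ Suc k) v = y" by (simp only: funpow.simps comp_apply k(2) fun_upd_same)
    finally have "(?q ^^ (k + n)) v = (?q ^^ (n - 1)) y" .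
    hence "(?q ^^ (k + n)) v = (p ^^ (n - 1)) y" by (simp only: qy)
    hence "(p ^^ (n - 1)) y = x" using a by (rule subst)
    with yk show ?thesis by blast
  next
    case False
    have nk: "\<forall>k<n. (?q ^^ k) v \<noteq> x" using False by blast
    have "(?q ^^ n) v = (p ^^ n) v" by (rule upd_iter[OF nk])
    hence "(p ^^ n) v = v" using cyc by metis
    hence "p v = v" using F n1 unfolding directed_forest_def by blast
    moreover have "(0::nat) < n" using n1 by simp
    hence "(?q ^^ 0) v \<noteq> x" using nk by blast
    hence "v \<noteq> x" by simp
    ultimately show ?thesis by simp
  qed
qed

lemma tree_all_related:
  assumes "trees p = {T}"
  shows "(u, w) \<in> same_tree p"
proof -
  have refl: "(z, z) \<in> same_tree p" for z unfolding same_tree_def by (auto intro: exI[of _ 0])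
  have "same_tree p `` {u} \<in> trees p" "same_tree p `` {w} \<in> trees p"
    unfolding trees_def by (auto intro: quotientI)
  hence "same_tree p `` {u} = same_tree p `` {w}" using assms by auto
  moreover have "w \<in> same_tree p `` {w}" using refl by auto
  ultimately show ?thesis by auto
qed

lemma all_related_tree:
  assumes "\<forall>u w. (u, w) \<in> same_tree p"
  shows "\<exists>T. trees p = {T}"
proof -
  have "\<And>u. same_tree p `` {u} = UNIV" using assms by auto
  hence "trees p = {UNIV}" unfolding trees_def quotient_def by auto
  thus ?thesis by blast
qed

lemma tree_maximal:
  assumes F: "directed_forest p" and T: "directed_tree p"
    and G: "directed_forest q" and th: "thinner p q"
  shows "q = p"
proof (rule ccontr)
  assume "q \<noteq> p"
  then obtain v where qv: "q v \<noteq> p v" by auto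
  have pv: "p v = v" using th qv unfolding thinner_def by auto
  let ?u = "q v"
  obtain T0 where "trees p = {T0}" using T unfolding directed_tree_def by blast
  hence "(?u, v) \<in> same_tree p" by (rule tree_all_related)
  then obtain m n where "(p ^^ m) ?u = (p ^^ n) v" unfolding same_tree_def by auto
  hence ex: "\<exists>m. (p ^^ m) ?u = v" using fix_iter[of p v, OF pv] by metis
  define m where "m = (LEAST m. (p ^^ m) ?u = v)"
  have m: "(p ^^ m) ?u = v" unfolding m_def using ex by (rule LeastI_ex)
  have notroot: "q ((p ^^ k) ?u) = p ((p ^^ k) ?u)" if "k < m" for k
  proof -
    have "(p ^^ k) ?u \<noteq> v" using that unfolding m_def using not_less_Least by blast
    moreover have "p ((p ^^ k) ?u) \<noteq> (p ^^ k) ?u"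
    proof
      assume r: "p ((p ^^ k) ?u) = (p ^^ k) ?u"
      have e: "m = (m - k) + k" using that by simp
      have "(p ^^ ((m - k) + k)) ?u = (p ^^ (m - k)) ((p ^^ k) ?u)"
        by (simp only: funpow_add comp_apply)
      hence "(p ^^ m) ?u = (p ^^ (m - k)) ((p ^^ k) ?u)" using e by metis
      also have "\<dots> = (p ^^ k) ?u" using fix_iter[of p "(p ^^ k) ?u", OF r] .
      finally show False using m \<open>(p ^^ k) ?u \<noteq> v\<close> by simp
    qed
    ultimately show ?thesis using th unfolding thinner_def by auto
  qed
  have "(q ^^ m) ?u = v" using iter_agree[of m q p ?u] notroot m by auto
  hence "(q ^^ Suc m) v = v" by (simp add: funpow_Suc_right del: funpow.simps)
  moreover have "(1::nat) \<le> Suc m" by simp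
  ultimately have "q v = v" using G unfolding directed_forest_def by blast
  thus False using qv pv by simp
qed

theorem theorem3p5:
  shows
  "(\<forall>p1 p2 :: 'a \<Rightarrow> 'a. directed_forest p1 \<longrightarrow> directed_forest p2 \<longrightarrow>
      (thinner p1 p2 \<longleftrightarrow> (\<forall>v. Chi p1 v \<subseteq> Chi p2 v)))
   \<and> partial_order_on {p :: 'a \<Rightarrow> 'a. directed_forest p} thinner_rel
   \<and> (directed_forest (id :: 'a \<Rightarrow> 'a) \<and>
      (\<forall>p :: 'a \<Rightarrow> 'a. directed_forest p \<longrightarrow> thinner id p))
   \<and> (\<forall>p :: 'a \<Rightarrow> 'a. directed_forest p \<longrightarrow>
      ((\<forall>q. directed_forest q \<longrightarrow> thinner p q \<longrightarrow> q = p) \<longleftrightarrow>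
       (directed_tree p \<or> rootless p)))"
proof (intro conjI allI impI)
  fix p1 p2 :: "'a \<Rightarrow> 'a"
  show "thinner p1 p2 \<longleftrightarrow> (\<forall>v. Chi p1 v \<subseteq> Chi p2 v)"
  proof
    assume th: "thinner p1 p2"
    show "\<forall>v. Chi p1 v \<subseteq> Chi p2 v"
    proof (intro allI subsetI)
      fix v u assume "u \<in> Chi p1 v"
      hence a: "p1 u = v" "v \<noteq> u" unfolding Chi_def by auto
      have "p1 u \<in> {u, p2 u}" using th unfolding thinner_def by blast
      hence "p2 u = v" using a by auto
      thus "u \<in> Chi p2 v" using a unfolding Chi_def by auto
    qed
  next
    assume C: "\<forall>v. Chi p1 v \<subseteq> Chi p2 v"
    show "thinner p1 p2" unfolding thinner_def
    proof
      fix u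
      show "p1 u \<in> {u, p2 u}"
      proof (cases "p1 u = u")
        case False
        hence "u \<in> Chi p1 (p1 u)" unfolding Chi_def by auto
        hence "u \<in> Chi p2 (p1 u)" using C by blast
        thus ?thesis unfolding Chi_def by auto
      qed simp
    qed
  qed
next
  show "partial_order_on {p :: 'a \<Rightarrow> 'a. directed_forest p} thinner_rel"
    unfolding partial_order_on_def preorder_on_def refl_on_def trans_def antisym_def
  proof (intro conjI)
    show "thinner_rel \<subseteq> {p. directed_forest p} \<times> {p. directed_forest p}"
      unfolding thinner_rel_def by auto
    show "\<forall>x\<in>{p. directed_forest p}. (x, x) \<in> thinner_rel"
      unfolding thinner_rel_def thinner_def by auto
    show "\<forall>x y z. (x, y) \<in> thinner_rel \<longrightarrow> (y, z) \<in> thinner_rel \<longrightarrow> (x, z) \<in> thinner_rel"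
    proof (intro allI impI)
      fix x y z
      assume A: "(x, y) \<in> thinner_rel" "(y, z) \<in> thinner_rel"
      have H: "\<forall>v. x v \<in> {v, z v}"
      proof
        fix v
        have "x v \<in> {v, y v}" "y v \<in> {v, z v}" using A unfolding thinner_rel_def thinner_def by auto
        thus "x v \<in> {v, z v}" by auto
      qed
      have "directed_forest x" "directed_forest z" using A unfolding thinner_rel_def by auto
      thus "(x, z) \<in> thinner_rel" using H unfolding thinner_rel_def thinner_def by simp
    qed
    show "\<forall>x y. (x, y) \<in> thinner_rel \<longrightarrow> (y, x) \<in> thinner_rel \<longrightarrow> x = y"
    proof (intro allI impI ext)
      fix x y v
      assume "(x, y) \<in> thinner_rel" "(y, x) \<in> thinner_rel"
      hence "x v \<in> {v, y v}" "y v \<in> {v, x v}" unfolding thinner_rel_def thinner_def by auto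
      thus "x v = y v" by auto
    qed
  qed
next
  show "directed_forest (id :: 'a \<Rightarrow> 'a)" unfolding directed_forest_def by simp
next
  fix p :: "'a \<Rightarrow> 'a"
  show "thinner id p" unfolding thinner_def by simp
next
  fix p :: "'a \<Rightarrow> 'a"
  assume F: "directed_forest p"
  show "(\<forall>q. directed_forest q \<longrightarrow> thinner p q \<longrightarrow> q = p) \<longleftrightarrow> (directed_tree p \<or> rootless p)"
  proof
    assume M: "\<forall>q. directed_forest q \<longrightarrow> thinner p q \<longrightarrow> q = p"
    show "directed_tree p \<or> rootless p"
    proof (cases "rootless p")
      case False
      then obtain x where x: "p x = x" unfolding rootless_def roots_def by auto
      have rel: "\<exists>a. (p ^^ a) y = x" for y
      proof (rule ccontr)
        assume na: "\<nexists>a. (p ^^ a) y = x"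
        have N: "\<not> (\<exists>m n. (p ^^ m) x = (p ^^ n) y)"
        proof
          assume "\<exists>m n. (p ^^ m) x = (p ^^ n) y"
          then obtain m n where mn: "(p ^^ m) x = (p ^^ n) y" by blast
          have "(p ^^ m) x = x" by (rule fix_iter[of p x m, OF x])
          hence "(p ^^ n) y = x" using mn by simp
          thus False using na by blast
        qed
        have "directed_forest (p(x := y))" by (rule attach_forest[OF F x N])
        moreover have "thinner p (p(x := y))" unfolding thinner_def using x by auto
        ultimately have "p(x := y) = p" using M by blast
        hence "(p(x := y)) x = p x" by simp
        hence "y = x" using x by simp
        hence "(p ^^ 0) y = x" by simp
        thus False using na by blast
      qed
      have "\<forall>u w. (u, w) \<in> same_tree p"
      proof (intro allI)
        fix u w
        obtain a where "(p ^^ a) u = x" using rel by blast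
        moreover obtain b where "(p ^^ b) w = x" using rel by blast
        ultimately have "(p ^^ a) u = (p ^^ b) w" by simp
        thus "(u, w) \<in> same_tree p" unfolding same_tree_def by blast
      qed
      hence "directed_tree p" unfolding directed_tree_def using F all_related_tree by blast
      thus ?thesis by simp
    qed simp
  next
    assume "directed_tree p \<or> rootless p"
    thus "\<forall>q. directed_forest q \<longrightarrow> thinner p q \<longrightarrow> q = p"
    proof
      assume "directed_tree p"
      thus ?thesis using tree_maximal F by blast
    next
      assume "rootless p"
      hence nr: "\<forall>v. p v \<noteq> v" unfolding rootless_def roots_def by auto
      show ?thesis
      proof (intro allI impI ext)
        fix q :: "'a \<Rightarrow> 'a" and v
        assume "thinner p q"
        hence "p v \<in> {v, q v}" unfolding thinner_def by blast
        thus "q v = p v" using nr by auto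
      qed
    qed
  qed
qed

end
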